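(* Let $m\ge 2$, $\alpha\in[0,1]$, $\pi$ a permutation of $E_{m-1}=\{1,\dots,m-1\}$, $V_\alpha$ as defined below, and for $\mathbf{x}^{(0)}\in S^{m-1}$ let $\mathbf{x}^{(n+1)}=V_\alpha(\mathbf{x}^{(n)})$ and let $\omega(\mathbf{x}^{(0)})$ be the set of limit points of $(\mathbf{x}^{(n)})_{n\ge0}$. Let $\Gamma=\{\mathbf{x}\in S^{m-1}: x_m=0\}\cup\{\mathbf{e}_m\}$, $\mathbf{e}_m=(0,\dots,0,1)$. Then: (i) if $\mathbf{x}^{(0)}\in\Gamma$, then $\omega(\mathbf{x}^{(0)})=\{\mathbf{e}_m\}$; (ii) if $\alpha\in(0,1)$ and $\pi\ne\mathrm{Id}$, then for every $\mathbf{x}^{(0)}\in S^{m-1}\setminus(\Gamma\cup X)$ the trajectory converges: $\omega(\mathbf{x}^{(0)})=\{\mathbf{b}\}$ for some point $\mathbf{b}\in X$, where $X=\{\mathbf{x}\in S^{m-1}: x_k=x_l \text{ for all } k,l\in\mathrm{supp}(\tau_i),\ i=1,\dots,q,\ x_m=1/2\}$.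
   Context: $S^{m-1}=\{\mathbf{x}=(x_1,\dots,x_m)\in\mathbb{R}^m: x_i\ge 0,\ \sum_{i=1}^m x_i=1\}$. For a permutation $\pi$ of $E_{m-1}$, $\pi=\tau_1\cdots\tau_q$ is its decomposition into disjoint cycles of length $\ge 2$, and $\mathrm{supp}(\tau_i)$ is the set of elements moved by $\tau_i$. For $\alpha\in[0,1]$ the operator $V_\alpha\colon S^{m-1}\to S^{m-1}$ is $\mathbf{x}\mapsto\mathbf{x}'$ with $x'_k=2x_m(\alpha x_k+(1-\alpha)x_{\pi(k)})$ for $k=1,\dots,m-1$ and $x'_m=x_m^2+\big(\sum_{i=1}^{m-1}x_i\big)^2$. *)

theory Defs
  imports "HOL-Analysis.Analysis" "HOL-Combinatorics.Permutations"
begin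

(* Points of R^m are encoded as functions nat => real, coordinates 1..m,
   all other coordinates are 0. *)

definition simplexS :: "nat \<Rightarrow> (nat \<Rightarrow> real) set" where
  "simplexS m = {x. (\<forall>i\<in>{1..m}. 0 \<le> x i) \<and> (\<forall>i. i \<notin> {1..m} \<longrightarrow> x i = 0)
                   \<and> (\<Sum>i=1..m. x i) = 1}"

definition Vop :: "nat \<Rightarrow> real \<Rightarrow> (nat \<Rightarrow> nat) \<Rightarrow> (nat \<Rightarrow> real) \<Rightarrow> (nat \<Rightarrow> real)" where
  "Vop m \<alpha> \<pi> x = (\<lambda>k. if k \<in> {1..m-1} then 2 * x m * (\<alpha> * x k + (1 - \<alpha>) * x (\<pi> k))
                      else if k = m then (x m)^2 + (\<Sum>i=1..m-1. x i)^2
                      else 0)"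

definition traj :: "nat \<Rightarrow> real \<Rightarrow> (nat \<Rightarrow> nat) \<Rightarrow> (nat \<Rightarrow> real) \<Rightarrow> nat \<Rightarrow> (nat \<Rightarrow> real)" where
  "traj m \<alpha> \<pi> x0 n = (Vop m \<alpha> \<pi> ^^ n) x0"

(* set of limit points of the trajectory (coordinatewise/product topology) *)
definition omega_set :: "nat \<Rightarrow> real \<Rightarrow> (nat \<Rightarrow> nat) \<Rightarrow> (nat \<Rightarrow> real) \<Rightarrow> (nat \<Rightarrow> real) set" where
  "omega_set m \<alpha> \<pi> x0 = {b. \<exists>r. strict_mono r \<and> (traj m \<alpha> \<pi> x0 \<circ> r) \<longlonglongrightarrow> b}"

definition e_last :: "nat \<Rightarrow> (nat \<Rightarrow> real)" where
  "e_last m = (\<lambda>i. if i = m then 1 else 0)"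

definition Gamma :: "nat \<Rightarrow> (nat \<Rightarrow> real) set" where
  "Gamma m = {x \<in> simplexS m. x m = 0} \<union> {e_last m}"

(* k and l lie in the support of the same cycle of \<pi> (for k \<noteq> l) *)
definition same_cycle :: "(nat \<Rightarrow> nat) \<Rightarrow> nat \<Rightarrow> nat \<Rightarrow> bool" where
  "same_cycle \<pi> k l \<longleftrightarrow> (\<exists>n. (\<pi> ^^ n) k = l)"

definition Xset :: "nat \<Rightarrow> (nat \<Rightarrow> nat) \<Rightarrow> (nat \<Rightarrow> real) set" where
  "Xset m \<pi> = {x \<in> simplexS m. (\<forall>k\<in>{1..m-1}. \<forall>l\<in>{1..m-1}. same_cycle \<pi> k l \<longrightarrow> x k = x l)
                \<and> x m = 1/2}"

end

theory Submission imports Defs begin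

lemma my_permutes_funpow:
  assumes "p permutes S" shows "(p ^^ n) permutes S"
  using assms by (induct n) (simp add: permutes_def, metis funpow_Suc_right permutes_compose)

lemma my_funpow_diff:
  assumes "inj p" and "i \<le> j" "(p ^^ i) a = (p ^^ j) a" shows "(p ^^ (j - i)) a = a"
proof -
  have "(p ^^ i) ((p ^^ (j - i)) a) = (p ^^ i) a"
    using assms(2-3) by (metis (no_types) add_diff_inverse_nat funpow_add not_le o_def)
  thus ?thesis
    unfolding inj_eq[OF inj_fn[OF assms(1)], of i] .
qed

lemma my_nilpotent:
  assumes "finite S" "p permutes S" shows "\<exists>n. (p ^^ n) = id \<and> n > 0"
  using assms
proof (induct S arbitrary: p)
  case empty thus ?case
    using id_funpow[of 1] unfolding permutes_empty by blast
next
  case (insert s S)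
  have "(\<lambda>n. (p ^^ n) s) ` UNIV \<subseteq> (insert s S)"
    using permutes_in_image[OF my_permutes_funpow[OF insert(4)], of _ s] by auto
  hence "\<not> inj_on (\<lambda>n. (p ^^ n) s)  UNIV"
    using insert(1) infinite_iff_countable_subset unfolding sym[OF finite_insert, of S s] by metis
  then obtain i j where ij: "i < j" "(p ^^ i) s = (p ^^ j) s"
    unfolding inj_on_def by (metis nat_neq_iff)
  hence "(p ^^ (j - i)) s = s"
    using my_funpow_diff[OF permutes_inj[OF insert(4)]] le_eq_less_or_eq by blast
  hence "p ^^ (j - i) permutes S"
    using permutes_superset[OF my_permutes_funpow[OF insert(4), of "j - i"], of S] by auto
  then obtain n where n: "((p ^^ (j - i)) ^^ n) = id" "n > 0"
    using insert(3) by blast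
  thus ?case
    using ij(1) nat_0_less_mult_iff zero_less_diff unfolding funpow_mult by metis
qed

definition Acx :: "real \<Rightarrow> (nat\<Rightarrow>nat) \<Rightarrow> (nat\<Rightarrow>complex) \<Rightarrow> (nat\<Rightarrow>complex)" where
  "Acx a p f = (\<lambda>k. of_real a * f k + of_real (1-a) * f (p k))"
definition Arx :: "real \<Rightarrow> (nat\<Rightarrow>nat) \<Rightarrow> (nat\<Rightarrow>real) \<Rightarrow> (nat\<Rightarrow>real)" where
  "Arx a p f = (\<lambda>k. a * f k + (1-a) * f (p k))"

lemma Acx_of_real: "(Acx a p ^^ n) (\<lambda>k. of_real (y k)) = (\<lambda>k. of_real ((Arx a p ^^ n) y k))"
  by (induction n) (auto simp: Acx_def Arx_def)

lemma Acx_scal: "(Acx a p ^^ n) (\<lambda>k. c * f k) = (\<lambda>k. c * (Acx a p ^^ n) f k)"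
  by (induction n) (auto simp: Acx_def algebra_simps)

lemma Acx_sum: "(Acx a p ^^ n) (\<lambda>k. \<Sum>s\<in>S. F s k) = (\<lambda>k. \<Sum>s\<in>S. (Acx a p ^^ n) (F s) k)"
  by (induction n) (auto simp: Acx_def sum_distrib_left sum.distrib)

lemma sum_shift_wrap:
  fixes g :: "nat \<Rightarrow> 'a::ab_group_add"
  assumes "g N = g 0"
  shows "(\<Sum>r<N. g (Suc r)) = (\<Sum>r<N. g r)"
proof -
  have "g 0 + (\<Sum>r<N. g (Suc r)) = (\<Sum>r<N. g r) + g N"
    by (metis sum.lessThan_Suc_shift sum.lessThan_Suc)
  then show ?thesis using assms by (simp add: add.commute)
qed

lemma cos_lt1: assumes "0 < x" "x < 2*pi" shows "cos x < 1"
proof -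
  have "0 < sin (x/2)" using assms by (intro sin_gt_zero) auto
  moreover have "cos x = 1 - 2 * sin (x/2)^2" using cos_double_sin[of "x/2"] by simp
  ultimately show ?thesis by (simp add: power2_eq_square)
qed

lemma norm_lt1:
  assumes "0 < a" "a < 1" "0 < x" "x < 2*pi"
  shows "norm (complex_of_real a + complex_of_real (1-a) * cis x) < 1"
proof -
  let ?z = "complex_of_real a + complex_of_real (1-a) * cis x"
  have c: "cos x < 1" using cos_lt1 assms by auto
  have "(cmod ?z)^2 = (a + (1-a)*cos x)^2 + ((1-a) * sin x)^2"
    by (simp add: cmod_power2)
  also have "\<dots> = a^2 + 2*a*(1-a)*cos x + (1-a)^2 * (sin x ^2 + cos x^2)"
    unfolding power2_eq_square by algebra
  also have "\<dots> = a^2 + 2*a*(1-a)*cos x + (1-a)^2" by (simp only: sin_cos_squared_add mult_1_right)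
  also have "\<dots> < 1"
  proof -
    have "2*a*(1-a)*cos x < 2*a*(1-a)" using assms c by simp
    thus ?thesis by (simp add: power2_eq_square algebra_simps)
  qed
  finally have "(cmod ?z)^2 < 1" .
  thus ?thesis by (smt (verit) norm_ge_zero power_less_one_iff one_power2 power_mono)
qed

lemma cis_ne1: assumes "0 < x" "x < 2*pi" shows "cis x \<noteq> 1" "cis (-x) \<noteq> 1"
proof -
  have "cos x < 1" using cos_lt1 assms by auto
  then show "cis x \<noteq> 1" "cis (-x) \<noteq> 1"
    by (metis Re_complex_of_real cis.sel(1) cos_minus less_irrefl of_real_1)+
qed

lemma averaging_limit:
  fixes p :: "nat \<Rightarrow> nat" and y :: "nat \<Rightarrow> real"
  assumes N: "N > 0" "(p ^^ N) = id" and a: "0 < a" "a < 1"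
  shows "(\<lambda>n. (Arx a p ^^ n) y k) \<longlonglongrightarrow> (\<Sum>r<N. y ((p ^^ r) k)) / real N"
proof -
  define Y where "Y = (\<lambda>k. complex_of_real (y k))"
  define th where "th = (\<lambda>s::nat. 2 * pi * real s / real N)"
  define E where "E = (\<lambda>s k. (\<Sum>r<N. cis (-(th s * real r)) * Y ((p ^^ r) k)) / of_nat N)"
  define lam where "lam = (\<lambda>s. complex_of_real a + complex_of_real (1-a) * cis (th s))"
  have shift: "E s (p k) = cis (th s) * E s k" for s k
  proof -
    define g where "g = (\<lambda>r. cis (-(th s * real r)) * Y ((p ^^ r) k))"
    have gN: "g N = g 0"
    proof -
      have "th s * real N = 2 * pi * real s" unfolding th_def using N by simp
      hence "cis (-(th s * real N)) = 1"
        by (metis cis_cnj cis_multiple_2pi complex_cnj_one Ints_of_nat)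
      thus ?thesis unfolding g_def using N by simp
    qed
    have "(\<Sum>r<N. cis (-(th s * real r)) * Y ((p ^^ r) (p k))) = (\<Sum>r<N. cis (th s) * g (Suc r))"
    proof (intro sum.cong refl)
      fix r
      have "cis (th s) * cis (-(th s * real (Suc r))) = cis (-(th s * real r))"
        by (simp add: cis_mult algebra_simps)
      moreover have "(p ^^ r) (p k) = (p ^^ Suc r) k" by (metis comp_apply funpow_Suc_right)
      ultimately show "cis (-(th s * real r)) * Y ((p ^^ r) (p k)) = cis (th s) * g (Suc r)"
        unfolding g_def by (metis mult.assoc)
    qed
    also have "\<dots> = cis (th s) * (\<Sum>r<N. g r)"
      by (simp add: sum_distrib_left[symmetric] sum_shift_wrap[OF gN])
    finally show ?thesis unfolding E_def g_def by simp
  qed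
  have eig: "Acx a p (E s) = (\<lambda>k. lam s * E s k)" for s
    unfolding Acx_def lam_def by (auto simp: shift algebra_simps)
  have pw: "(Acx a p ^^ n) (E s) = (\<lambda>k. lam s ^ n * E s k)" for s n
  proof (induction n)
    case (Suc n)
    have "(Acx a p ^^ Suc n) (E s) = Acx a p (\<lambda>k. lam s ^ n * E s k)" using Suc by simp
    also have "\<dots> = (\<lambda>k. lam s ^ n * Acx a p (E s) k)" by (simp add: Acx_def algebra_simps)
    finally show ?case by (auto simp: eig mult_ac)
  qed simp
  have filt: "(\<Sum>s<N. E s k) = Y k" for k
  proof -
    have inner: "(\<Sum>s<N. cis (-(th s * real r))) = (if r = 0 then of_nat N else 0)" if "r < N" for r
    proof -
      define u where "u = cis (-(2 * pi * real r / real N))"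
      have "cis (-(th s * real r)) = u ^ s" for s
      proof -
        have "u ^ s = cis (real s * -(2 * pi * real r / real N))" by (simp only: u_def Complex.DeMoivre)
        thus ?thesis by (simp add: th_def algebra_simps)
      qed
      hence "(\<Sum>s<N. cis (-(th s * real r))) = (\<Sum>s<N. u ^ s)" by simp
      moreover have "u ^ N = 1"
      proof -
        have "u ^ N = cis (-(2 * pi * real r))" unfolding u_def Complex.DeMoivre using N by simp
        thus ?thesis by (metis cis_cnj cis_multiple_2pi complex_cnj_one Ints_of_nat)
      qed
      moreover have "r \<noteq> 0 \<Longrightarrow> u \<noteq> 1"
      proof -
        assume "r \<noteq> 0"
        have "0 < 2 * pi * real r / real N" using \<open>r \<noteq> 0\<close> N by simp
        moreover have "2 * pi * real r / real N < 2 * pi" using that N by (simp add: field_simps)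
        ultimately show ?thesis unfolding u_def using cis_ne1 by blast
      qed
      ultimately show ?thesis
      proof (cases "r = 0")
        case False
        with \<open>r \<noteq> 0 \<Longrightarrow> u \<noteq> 1\<close> have "u \<noteq> 1" by blast
        hence "(\<Sum>s<N. u ^ s) = 0" using \<open>u ^ N = 1\<close> by (simp add: sum_gp_strict)
        thus ?thesis using False \<open>(\<Sum>s<N. cis (-(th s * real r))) = (\<Sum>s<N. u ^ s)\<close> by simp
      qed simp
    qed
    have "(\<Sum>s<N. E s k) = (\<Sum>s<N. \<Sum>r<N. cis (-(th s * real r)) * Y ((p ^^ r) k)) / of_nat N"
      unfolding E_def by (simp only: sum_divide_distrib)
    also have "\<dots> = (\<Sum>r<N. \<Sum>s<N. cis (-(th s * real r)) * Y ((p ^^ r) k)) / of_nat N"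
      by (subst sum.swap) (rule refl)
    also have "\<dots> = (\<Sum>r<N. (\<Sum>s<N. cis (-(th s * real r))) * Y ((p ^^ r) k)) / of_nat N"
      by (simp only: sum_distrib_right)
    also have "\<dots> = (\<Sum>r<N. (if r = 0 then of_nat N * Y ((p ^^ r) k) else 0)) / of_nat N"
      by (intro arg_cong[where f="\<lambda>x. x / _"] sum.cong refl) (simp add: inner)
    also have "\<dots> = Y k" using N by (simp add: sum.delta)
    finally show ?thesis .
  qed
  have main: "complex_of_real ((Arx a p ^^ n) y k) = (\<Sum>s<N. lam s ^ n * E s k)" for n
  proof -
    have "complex_of_real ((Arx a p ^^ n) y k) = (Acx a p ^^ n) Y k"
      unfolding Y_def Acx_of_real by simp
    also have "Y = (\<lambda>k. \<Sum>s<N. E s k)" using filt by auto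
    also have "(Acx a p ^^ n) (\<lambda>k. \<Sum>s<N. E s k) k = (\<Sum>s<N. lam s ^ n * E s k)"
      by (simp add: Acx_sum pw)
    finally show ?thesis .
  qed
  have lim: "(\<lambda>n. \<Sum>s<N. lam s ^ n * E s k) \<longlonglongrightarrow> (\<Sum>s<N. if s = 0 then E 0 k else 0)"
  proof (intro tendsto_sum)
    fix s assume "s \<in> {..<N}"
    show "(\<lambda>n. lam s ^ n * E s k) \<longlonglongrightarrow> (if s = 0 then E 0 k else 0)"
    proof (cases "s = 0")
      case True
      have "lam 0 = 1" unfolding lam_def th_def by (simp flip: of_real_add)
      then show ?thesis using True by simp
    next
      case False
      have "0 < th s" "th s < 2 * pi" unfolding th_def using False \<open>s \<in> {..<N}\<close> N
        by (auto simp: field_simps)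
      hence "norm (lam s) < 1" unfolding lam_def using norm_lt1 a by blast
      hence "(\<lambda>n. lam s ^ n) \<longlonglongrightarrow> 0" by (rule LIMSEQ_power_zero)
      hence "(\<lambda>n. lam s ^ n * E s k) \<longlonglongrightarrow> 0 * E s k" by (intro tendsto_mult tendsto_const)
      then show ?thesis using False by simp
    qed
  qed
  have "E 0 k = complex_of_real ((\<Sum>r<N. y ((p ^^ r) k)) / real N)"
    unfolding E_def th_def Y_def by simp
  moreover have "(\<Sum>s<N. if s = 0 then E 0 k else 0) = E 0 k" using N by (simp add: sum.delta)
  ultimately have "(\<lambda>n. complex_of_real ((Arx a p ^^ n) y k)) \<longlonglongrightarrow> complex_of_real ((\<Sum>r<N. y ((p ^^ r) k)) / real N)"
    using lim main by simp
  thus ?thesis by (simp only: tendsto_of_real_iff)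
qed

lemma fun_tendsto_iff:
  fixes X :: "nat \<Rightarrow> nat \<Rightarrow> real"
  shows "(X \<longlonglongrightarrow> b) \<longleftrightarrow> (\<forall>i. ((\<lambda>n. X n i) \<longlonglongrightarrow> b i))"
proof -
  have "(X \<longlonglongrightarrow> b) \<longleftrightarrow> limitin (product_topology (\<lambda>i. euclidean) UNIV) X b sequentially"
    by (simp add: euclidean_product_topology)
  also have "\<dots> \<longleftrightarrow> (\<forall>i. ((\<lambda>n. X n i) \<longlonglongrightarrow> b i))"
    by (simp add: limitin_componentwise)
  finally show ?thesis .
qed

lemma omega_single:
  fixes X :: "nat \<Rightarrow> nat \<Rightarrow> real"
  assumes "X \<longlonglongrightarrow> b"
  shows "{c. \<exists>r. strict_mono r \<and> (X \<circ> r) \<longlonglongrightarrow> c} = {b}"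
proof -
  have "strict_mono (id::nat\<Rightarrow>nat)" by (simp add: strict_mono_def)
  moreover have "(X \<circ> id) \<longlonglongrightarrow> b" using assms by simp
  moreover have "c = b" if "strict_mono r" "(X \<circ> r) \<longlonglongrightarrow> c" for r c
    using LIMSEQ_subseq_LIMSEQ[OF assms that(1)] that(2) LIMSEQ_unique by blast
  ultimately show ?thesis by blast
qed

lemma funpow_in: "p permutes S \<Longrightarrow> k \<in> S \<Longrightarrow> (p ^^ r) k \<in> S"
  by (induction r) (auto simp: permutes_in_image)

lemma R_shift:
  fixes y :: "nat \<Rightarrow> real"
  assumes "(p ^^ N) = id"
  shows "(\<Sum>r<N. y ((p ^^ r) (p k))) = (\<Sum>r<N. y ((p ^^ r) k))"
proof -
  have "(\<Sum>r<N. y ((p ^^ r) (p k))) = (\<Sum>r<N. (\<lambda>r. y ((p ^^ r) k)) (Suc r))"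
    by (intro sum.cong refl) (metis comp_apply funpow_Suc_right)
  also have "\<dots> = (\<Sum>r<N. y ((p ^^ r) k))"
    by (rule sum_shift_wrap) (simp add: assms)
  finally show ?thesis .
qed

lemma R_funpow:
  fixes y :: "nat \<Rightarrow> real"
  assumes "(p ^^ N) = id"
  shows "(\<Sum>r<N. y ((p ^^ r) ((p ^^ n) k))) = (\<Sum>r<N. y ((p ^^ r) k))"
proof (induction n)
  case (Suc n)
  then show ?case using R_shift[OF assms, of y "(p ^^ n) k"] by simp
qed simp

theorem theorem2:
  fixes m :: nat and \<alpha> :: real and \<pi> :: "nat \<Rightarrow> nat"
  assumes "m \<ge> 2" and "0 \<le> \<alpha>" and "\<alpha> \<le> 1" and "\<pi> permutes {1..m-1}"
  shows "(\<forall>x0\<in>Gamma m. omega_set m \<alpha> \<pi> x0 = {e_last m})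
       \<and> (0 < \<alpha> \<and> \<alpha> < 1 \<and> \<pi> \<noteq> id \<longrightarrow>
            (\<forall>x0 \<in> simplexS m - (Gamma m \<union> Xset m \<pi>).
                \<exists>b\<in>Xset m \<pi>. omega_set m \<alpha> \<pi> x0 = {b}))"
proof -
  define V where "V = Vop m \<alpha> \<pi>"
  define e where "e = e_last m"
  have pin: "\<And>k. k \<in> {1..m-1} \<Longrightarrow> \<pi> k \<in> {1..m-1}"
    by (rule permutes_in_image[OF assms(4), THEN iffD2])
  have trajS: "\<And>x0 n. traj m \<alpha> \<pi> x0 (Suc n) = V (traj m \<alpha> \<pi> x0 n)"
    by (simp add: traj_def V_def)
  have ins: "{1..m} = insert m {1..m-1}" using assms(1) by auto
  have mnot: "m \<notin> {1..m-1}" using assms(1) by auto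
  have sumsplit: "\<And>f::nat\<Rightarrow>real. (\<Sum>i=1..m. f i) = (\<Sum>i=1..m-1. f i) + f m"
    using ins mnot by (simp add: add.commute)
  have Ve: "V e = e"
  proof (rule ext)
    fix k
    have s0: "(\<Sum>i=1..m-1. e i) = 0" unfolding e_def e_last_def using mnot
      by (intro sum.neutral) auto
    have em: "e m = 1" unfolding e_def e_last_def by simp
    show "V e k = e k"
    proof (cases "k \<in> {1..m-1}")
      case True
      then have "e k = 0" "e (\<pi> k) = 0" using pin[OF True] mnot unfolding e_def e_last_def by auto
      then show ?thesis using True unfolding V_def Vop_def by simp
    next
      case False
      show ?thesis
      proof (cases "k = m")
        case True
        show ?thesis unfolding V_def Vop_def
          by (subst if_not_P[OF False], subst if_P[OF True]) (use s0 em in \<open>simp add: True\<close>)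
      next
        case F2: False
        hence "e k = 0" unfolding e_def e_last_def by simp
        then show ?thesis unfolding V_def Vop_def
          by (subst if_not_P[OF False], subst if_not_P[OF F2]) simp
      qed
    qed
  qed
  have V0: "V x = e" if "x \<in> simplexS m" "x m = 0" for x
  proof (rule ext)
    fix k
    have "(\<Sum>i=1..m. x i) = 1" using that(1) unfolding simplexS_def by auto
    hence s1: "(\<Sum>i=1..m-1. x i) = 1" using sumsplit[of x] that(2) by simp
    have em: "e m = 1" unfolding e_def e_last_def by simp
    show "V x k = e k"
    proof (cases "k \<in> {1..m-1}")
      case True
      hence "e k = 0" using mnot unfolding e_def e_last_def by auto
      then show ?thesis using True that(2) unfolding V_def Vop_def by simp
    next
      case False
      show ?thesis
      proof (cases "k = m")
        case True
        show ?thesis unfolding V_def Vop_def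
          by (subst if_not_P[OF False], subst if_P[OF True]) (use s1 em that(2) in \<open>simp add: True\<close>)
      next
        case F2: False
        hence "e k = 0" unfolding e_def e_last_def by simp
        then show ?thesis unfolding V_def Vop_def
          by (subst if_not_P[OF False], subst if_not_P[OF F2]) simp
      qed
    qed
  qed
  have partI: "\<forall>x0\<in>Gamma m. omega_set m \<alpha> \<pi> x0 = {e_last m}"
  proof
    fix x0 assume x0: "x0 \<in> Gamma m"
    have all: "traj m \<alpha> \<pi> x0 (Suc n) = e" for n
    proof (induction n)
      case 0
      have "traj m \<alpha> \<pi> x0 (Suc 0) = V x0" using trajS[of x0 0] by (simp add: traj_def)
      also have "\<dots> = e" using x0 Ve V0 unfolding Gamma_def e_def by auto
      finally show ?case .
    next
      case (Suc n)
      then show ?case using trajS Ve by simp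
    qed
    have "(\<lambda>n. traj m \<alpha> \<pi> x0 (Suc n)) \<longlonglongrightarrow> e" using all by simp
    hence "traj m \<alpha> \<pi> x0 \<longlonglongrightarrow> e" by (rule LIMSEQ_imp_Suc)
    thus "omega_set m \<alpha> \<pi> x0 = {e_last m}"
      unfolding omega_set_def e_def by (rule omega_single)
  qed
  have partII: "\<exists>b\<in>Xset m \<pi>. omega_set m \<alpha> \<pi> x0 = {b}"
    if a: "0 < \<alpha>" "\<alpha> < 1" and x0: "x0 \<in> simplexS m - (Gamma m \<union> Xset m \<pi>)" for x0
  proof -
    define x where "x = traj m \<alpha> \<pi> x0"
    define t where "t = (\<lambda>n. x n m)"
    define s where "s = (\<lambda>n. \<Sum>i=1..m-1. x n i)"
    define S where "S = s 0"
    have x0S: "x0 \<in> simplexS m" using x0 by auto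
    have xz: "x 0 = x0" unfolding x_def traj_def by simp
    have xS: "x (Suc n) = V (x n)" for n unfolding x_def using trajS by simp
    have rec_k: "x (Suc n) k = 2 * t n * (\<alpha> * x n k + (1-\<alpha>) * x n (\<pi> k))" if "k \<in> {1..m-1}" for n k
      using that unfolding xS V_def Vop_def t_def by simp
    have rec_m: "t (Suc n) = t n ^ 2 + s n ^ 2" for n
      by (simp only: t_def s_def xS V_def Vop_def if_not_P[OF mnot]) simp
    have rec_o: "x n k = 0" if "k \<notin> {1..m}" for n k
    proof (cases n)
      case 0 then show ?thesis using x0S that xz unfolding simplexS_def by auto
    next
      case (Suc n')
      have k1: "k \<notin> {1..m-1}" "k \<noteq> m" using that assms(1) by auto
      show ?thesis by (simp only: Suc xS V_def Vop_def if_not_P[OF k1(1)] if_not_P[OF k1(2)])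
    qed
    have rec_s: "s (Suc n) = 2 * t n * s n" for n
    proof -
      have perm: "(\<Sum>k=1..m-1. x n (\<pi> k)) = s n"
        unfolding s_def using sum.permute[OF assms(4), of "x n"] by (simp add: comp_def)
      have "s (Suc n) = (\<Sum>k=1..m-1. 2 * t n * (\<alpha> * x n k + (1-\<alpha>) * x n (\<pi> k)))"
        unfolding s_def using rec_k by (intro sum.cong) auto
      also have "\<dots> = (\<Sum>k=1..m-1. (2 * t n * \<alpha>) * x n k + (2 * t n * (1-\<alpha>)) * x n (\<pi> k))"
        by (simp add: algebra_simps)
      also have "\<dots> = (2 * t n * \<alpha>) * s n + (2 * t n * (1-\<alpha>)) * (\<Sum>k=1..m-1. x n (\<pi> k))"
        unfolding s_def by (simp only: sum.distrib sum_distrib_left)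
      finally show ?thesis using perm by (simp add: algebra_simps)
    qed
    have ts: "t n + s n = 1" for n
    proof (induction n)
      case 0
      have "(\<Sum>i=1..m. x0 i) = 1" using x0S unfolding simplexS_def by auto
      then show ?case using sumsplit[of x0] xz unfolding t_def s_def by simp
    next
      case (Suc n)
      have "t (Suc n) + s (Suc n) = (t n + s n)^2" using rec_m rec_s by (simp add: power2_eq_square algebra_simps)
      then show ?case using Suc by simp
    qed
    have t0nn: "x0 m \<ge> 0" using x0S assms(1) unfolding simplexS_def by auto
    have t0ne: "x0 m \<noteq> 0" using x0 x0S unfolding Gamma_def by auto
    have t0: "t 0 > 0" using t0nn t0ne xz unfolding t_def by simp
    have S0: "S > 0"
    proof -
      have nn: "\<forall>i\<in>{1..m-1}. 0 \<le> x0 i" using x0S unfolding simplexS_def by auto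
      hence "S \<ge> 0" unfolding S_def s_def xz by (intro sum_nonneg) blast
      moreover have "S \<noteq> 0"
      proof
        assume "S = 0"
        hence z: "\<forall>i\<in>{1..m-1}. x0 i = 0" using nn sum_nonneg_eq_0_iff[of "{1..m-1}" x0]
          unfolding S_def s_def xz by simp
        hence "x0 m = 1" using ts[of 0] \<open>S = 0\<close> xz unfolding S_def t_def by simp
        moreover have "x0 i = 0" if "i \<noteq> m" for i
        proof (cases "i \<in> {1..m-1}")
          case True then show ?thesis using z by auto
        next
          case False
          hence "i \<notin> {1..m}" using that ins by auto
          then show ?thesis using x0S unfolding simplexS_def by auto
        qed
        ultimately have "x0 = e_last m" unfolding e_last_def by auto
        thus False using x0 unfolding Gamma_def by auto
      qed
      ultimately show ?thesis by simp
    qed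
    have t0lt: "t 0 < 1" using ts[of 0] S0 unfolding S_def by simp
    define v where "v = (\<lambda>n. \<bar>2 * t n - 1\<bar>)"
    have vS: "v (Suc n) = v n ^ 2" for n
    proof -
      have "s n = 1 - t n" using ts[of n] by simp
      hence "t (Suc n) = t n ^ 2 + (1 - t n) ^ 2" using rec_m[of n] by simp
      hence "2 * t (Suc n) - 1 = (2 * t n - 1) ^ 2" by (simp add: power2_eq_square algebra_simps)
      thus ?thesis unfolding v_def by simp
    qed
    have vpow: "v n = v 0 ^ (2 ^ n)" for n
    proof (induction n)
      case (Suc n)
      have "v (Suc n) = (v 0 ^ (2^n))^2" using vS[of n] Suc.IH by simp
      also have "\<dots> = v 0 ^ (2^n * 2)" by (rule power_mult[symmetric])
      also have "(2::nat)^n * 2 = 2^Suc n" by simp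
      finally show ?case .
    qed simp
    have v0: "0 \<le> v 0" "v 0 < 1" using t0 t0lt unfolding v_def by auto
    have vle: "v n \<le> v 0 ^ n" for n
    proof -
      have "v 0 ^ (2^n) \<le> v 0 ^ n" using v0 by (intro power_decreasing) (auto intro: less_imp_le less_exp)
      thus ?thesis using vpow[of n] by simp
    qed
    have "(\<lambda>n. v 0 ^ n) \<longlonglongrightarrow> 0" using v0 by (intro LIMSEQ_realpow_zero) auto
    moreover have ev1: "\<forall>\<^sub>F n in sequentially. 0 \<le> v n" unfolding v_def by simp
    moreover have ev2: "\<forall>\<^sub>F n in sequentially. v n \<le> v 0 ^ n" using vle by simp
    ultimately have "v \<longlonglongrightarrow> 0" using tendsto_sandwich[OF ev1 ev2 tendsto_const] by blast
    hence "(\<lambda>n. 2 * t n - 1) \<longlonglongrightarrow> 0" unfolding v_def by (simp add: tendsto_rabs_zero_iff)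
    hence "(\<lambda>n. ((2 * t n - 1) + 1) / 2) \<longlonglongrightarrow> (0 + 1) / 2"
      by (intro tendsto_divide tendsto_add tendsto_const) auto
    hence tlim: "t \<longlonglongrightarrow> 1/2" by simp
    have "(\<lambda>n. 1 - t n) \<longlonglongrightarrow> 1 - 1/2" by (intro tendsto_diff tendsto_const tlim)
    moreover have "(\<lambda>n. 1 - t n) = s" using ts by (auto simp: algebra_simps)
    ultimately have slim: "s \<longlonglongrightarrow> 1/2" by simp
    obtain N where N: "(\<pi> ^^ N) = id" "N > 0"
      using my_nilpotent[OF finite_atLeastAtMost assms(4)] by blast
    define R where "R = (\<lambda>k. (\<Sum>r<N. x0 ((\<pi> ^^ r) k)) / real N)"
    have xform: "\<forall>k\<in>{1..m-1}. x n k = (s n / S) * (Arx \<alpha> \<pi> ^^ n) x0 k" for n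
    proof (induction n)
      case 0 then show ?case using S0 xz unfolding S_def by simp
    next
      case (Suc n)
      show ?case
      proof
        fix k assume k: "k \<in> {1..m-1}"
        have "x (Suc n) k = 2 * t n * (\<alpha> * x n k + (1-\<alpha>) * x n (\<pi> k))" using rec_k k by simp
        also have "\<dots> = 2 * t n * (\<alpha> * ((s n / S) * (Arx \<alpha> \<pi> ^^ n) x0 k)
                         + (1-\<alpha>) * ((s n / S) * (Arx \<alpha> \<pi> ^^ n) x0 (\<pi> k)))"
          using Suc k pin[OF k] by simp
        also have "\<dots> = (2 * t n * s n / S) * Arx \<alpha> \<pi> ((Arx \<alpha> \<pi> ^^ n) x0) k"
        proof -
          have gen: "\<And>a1 a2 c. 2 * t n * (\<alpha> * (c * a1) + (1-\<alpha>) * (c * a2))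
                        = (2 * t n * c) * (\<alpha> * a1 + (1-\<alpha>) * a2)" by (simp add: algebra_simps)
          have app: "\<And>g. Arx \<alpha> \<pi> g k = \<alpha> * g k + (1-\<alpha>) * g (\<pi> k)" by (simp add: Arx_def)
          show ?thesis by (simp only: gen app times_divide_eq_right)
        qed
        also have "\<dots> = (s (Suc n) / S) * (Arx \<alpha> \<pi> ^^ Suc n) x0 k" using rec_s by simp
        finally show "x (Suc n) k = (s (Suc n) / S) * (Arx \<alpha> \<pi> ^^ Suc n) x0 k" .
      qed
    qed
    have klim: "(\<lambda>n. x n k) \<longlonglongrightarrow> (1/2) / S * R k" if k: "k \<in> {1..m-1}" for k
    proof -
      have "(\<lambda>n. (s n / S) * (Arx \<alpha> \<pi> ^^ n) x0 k) \<longlonglongrightarrow> (1/2) / S * R k"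
        unfolding R_def
        by (intro tendsto_mult tendsto_divide tendsto_const slim averaging_limit N a) (use S0 in auto)
      thus ?thesis using xform k by simp
    qed
    define b where "b = (\<lambda>k. if k \<in> {1..m-1} then (1/2) / S * R k else if k = m then 1/2 else 0)"
    have bk: "b k = (1/2) / S * R k" if "k \<in> {1..m-1}" for k
      unfolding b_def by (simp only: if_P[OF that])
    have bm: "b m = 1/2" unfolding b_def by (simp only: if_not_P[OF mnot]) simp
    have bo: "b k = 0" if "k \<notin> {1..m-1}" "k \<noteq> m" for k
      unfolding b_def by (simp only: if_not_P[OF that(1)] if_not_P[OF that(2)])
    have blim: "(\<lambda>n. x n i) \<longlonglongrightarrow> b i" for i
    proof (cases "i \<in> {1..m-1}")
      case True then show ?thesis using klim[OF True] bk[OF True] by simp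
    next
      case False
      show ?thesis
      proof (cases "i = m")
        case True
        have "(\<lambda>n. x n m) \<longlonglongrightarrow> b m" using tlim unfolding t_def bm .
        then show ?thesis using True by simp
      next
        case False2: False
        hence "i \<notin> {1..m}" using False ins by auto
        then show ?thesis using rec_o bo[OF False False2] by simp
      qed
    qed
    hence conv: "x \<longlonglongrightarrow> b" by (simp add: fun_tendsto_iff)
    have Rnn: "R k \<ge> 0" if "k \<in> {1..m-1}" for k
    proof -
      have "x0 ((\<pi> ^^ r) k) \<ge> 0" for r
      proof -
        have "(\<pi> ^^ r) k \<in> {1..m-1}" by (rule funpow_in[OF assms(4) that])
        hence "(\<pi> ^^ r) k \<in> {1..m}" by auto
        thus ?thesis using x0S unfolding simplexS_def by auto
      qed
      thus ?thesis unfolding R_def by (intro divide_nonneg_nonneg sum_nonneg) auto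
    qed
    have bsum: "(\<Sum>i=1..m. b i) = 1"
    proof -
      have lim: "(\<lambda>n. \<Sum>i=1..m. x n i) \<longlonglongrightarrow> (\<Sum>i=1..m. b i)" by (intro tendsto_sum blim)
      have eq: "(\<Sum>i=1..m. x n i) = 1" for n
      proof -
        have "(\<Sum>i=1..m. x n i) = s n + t n" unfolding s_def t_def by (rule sumsplit)
        thus ?thesis using ts[of n] by simp
      qed
      from lim have "(\<lambda>n. 1::real) \<longlonglongrightarrow> (\<Sum>i=1..m. b i)" by (simp only: eq)
      from LIMSEQ_unique[OF this tendsto_const] show ?thesis by simp
    qed
    have bX: "b \<in> Xset m \<pi>"
      unfolding Xset_def simplexS_def
    proof (intro CollectI conjI ballI allI impI)
      fix i assume "i \<in> {1..m}"
      show "0 \<le> b i"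
      proof (cases "i \<in> {1..m-1}")
        case True then show ?thesis using bk[OF True] Rnn[OF True] S0 by simp
      next
        case False then show ?thesis using bm bo[OF False] by (cases "i = m") auto
      qed
    next
      fix i assume "i \<notin> {1..m}"
      hence "i \<notin> {1..m-1}" "i \<noteq> m" using ins by auto
      then show "b i = 0" by (rule bo)
    next
      show "(\<Sum>i=1..m. b i) = 1" by (rule bsum)
    next
      fix k l assume kl: "k \<in> {1..m-1}" "l \<in> {1..m-1}" "same_cycle \<pi> k l"
      then obtain n where "(\<pi> ^^ n) k = l" unfolding same_cycle_def by blast
      hence "R l = R k" unfolding R_def using R_funpow[OF N(1), of x0 n k] by simp
      then show "b k = b l" using bk[OF kl(1)] bk[OF kl(2)] by simp
    next
      show "b m = 1/2" by (rule bm)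
    qed
    have "omega_set m \<alpha> \<pi> x0 = {b}"
      unfolding omega_set_def using conv unfolding x_def by (rule omega_single)
    thus ?thesis using bX by blast
  qed
  show ?thesis using partI partII by blast
qed

end
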